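(* Let $B$ be a nonzero real vector space, $\lfloor\cdot,\cdot\rfloor$ a symmetric bilinear form on $B$, $q(b):=\tfrac12\lfloor b,b\rfloor$, and let $f$ be a BC--function on $B$. Then ${\cal P}_q(f^@)={\cal P}_q(f)$.
   Context: For a proper convex $f\colon B\to\,]{-}\infty,\infty]$, $f^@(c):=\sup_{b\in B}[\lfloor b,c\rfloor-f(b)]$. A BC--function is a proper convex $f\colon B\to\,]{-}\infty,\infty]$ with $f^@(b)\ge f(b)\ge q(b)$ for all $b\in B$. For a function $h\ge q$ on $B$, ${\cal P}_q(h):=\{b\in B\colon h(b)=q(b)\}$. *)

theory Defs
  imports "HOL-Analysis.Analysis" "HOL-Library.Extended_Real"
begin

text \<open>Functions B \<rightarrow> ]-\<infinity>,\<infinity>] are modelled as ereal-valued functions never equal to -\<infinity>.\<close>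

definition proper_ereal :: "('b \<Rightarrow> ereal) \<Rightarrow> bool" where
  "proper_ereal f \<longleftrightarrow> (\<forall>b. f b \<noteq> -\<infinity>) \<and> (\<exists>b. f b \<noteq> \<infinity>)"

definition convex_ereal :: "('b::real_vector \<Rightarrow> ereal) \<Rightarrow> bool" where
  "convex_ereal f \<longleftrightarrow> (\<forall>x y. \<forall>t::real. 0 < t \<and> t < 1 \<longrightarrow>
      f (t *\<^sub>R x + (1 - t) *\<^sub>R y) \<le> ereal t * f x + ereal (1 - t) * f y)"

definition qf :: "('b \<Rightarrow> 'b \<Rightarrow> real) \<Rightarrow> 'b \<Rightarrow> real" where
  "qf bf b = (1/2) * bf b b"

definition fat :: "('b \<Rightarrow> 'b \<Rightarrow> real) \<Rightarrow> ('b \<Rightarrow> ereal) \<Rightarrow> 'b \<Rightarrow> ereal" where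
  "fat bf f c = (SUP b. ereal (bf b c) - f b)"

definition BC_function :: "('b::real_vector \<Rightarrow> 'b \<Rightarrow> real) \<Rightarrow> ('b \<Rightarrow> ereal) \<Rightarrow> bool" where
  "BC_function bf f \<longleftrightarrow> proper_ereal f \<and> convex_ereal f \<and>
     (\<forall>b. fat bf f b \<ge> f b \<and> f b \<ge> ereal (qf bf b))"

definition Pq :: "('b \<Rightarrow> 'b \<Rightarrow> real) \<Rightarrow> ('b \<Rightarrow> ereal) \<Rightarrow> 'b set" where
  "Pq bf h = {b. h b = ereal (qf bf b)}"

end

theory Submission
  imports Defs
begin

lemma small_t:
  fixes L Q R :: real
  assumes "\<And>t. 0 < t \<Longrightarrow> t < 1 \<Longrightarrow> t * L + t*t*Q \<le> t * R"
  shows "L \<le> R"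
proof (rule ccontr)
  assume nl: "\<not> L \<le> R"
  define d where "d = L - R"
  have d: "d > 0" using nl d_def by auto
  define M where "M = \<bar>Q\<bar> + 1"
  have M: "M > 0" "\<bar>Q\<bar> \<le> M" by (auto simp: M_def)
  define t where "t = min (1/2) (d / (2*M))"
  have t0: "0 < t" using d M by (simp add: t_def)
  have t1: "t < 1" by (simp add: t_def)
  have "t \<le> d / (2*M)" by (simp add: t_def)
  hence tM: "t * M \<le> d / 2" using M by (simp add: field_simps)
  have "t * \<bar>Q\<bar> \<le> t * M" using t0 M by (intro mult_left_mono) auto
  hence tq: "t * \<bar>Q\<bar> < d" using tM d by linarith
  have h: "t * (L + t*Q) \<le> t * R" using assms[OF t0 t1] by (simp add: algebra_simps)
  have "L + t*Q \<le> R" using mult_left_le_imp_le[OF h t0] .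
  moreover have "- (t*Q) \<le> t*\<bar>Q\<bar>" using t0 by (metis abs_ge_minus_self abs_mult abs_of_pos minus_mult_right)
  ultimately show False using tq d_def by linarith
qed

theorem lemma3p10:
  fixes bf :: "'b::real_vector \<Rightarrow> 'b \<Rightarrow> real" and f :: "'b \<Rightarrow> ereal"
  assumes "\<exists>b::'b. b \<noteq> 0"
    and "bilinear bf"
    and "\<And>x y. bf x y = bf y x"
    and "BC_function bf f"
  shows "Pq bf (fat bf f) = Pq bf f"
proof -
  have bc: "\<And>b. fat bf f b \<ge> f b" "\<And>b. f b \<ge> ereal (qf bf b)"
    and cv: "convex_ereal f" using assms(4) unfolding BC_function_def by auto
  have key: "fat bf f b \<le> ereal (qf bf b)" if fb: "f b = ereal (qf bf b)" for b
    unfolding fat_def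
  proof (rule SUP_least)
    fix c
    show "ereal (bf c b) - f c \<le> ereal (qf bf b)"
    proof (cases "f c")
      case PInf thus ?thesis by simp
    next
      case MInf thus ?thesis using bc(2)[of c] by simp
    next
      case (real r)
      define d where "d = c - b"
      have "bf b d \<le> r - qf bf b"
      proof (rule small_t[where Q = "qf bf d"])
        fix t :: real assume t: "0 < t" "t < 1"
        have eq: "t *\<^sub>R c + (1 - t) *\<^sub>R b = b + t *\<^sub>R d"
          by (simp add: d_def algebra_simps)
        have "f (t *\<^sub>R c + (1 - t) *\<^sub>R b) \<le> ereal t * f c + ereal (1 - t) * f b"
          using cv t unfolding convex_ereal_def by blast
        also have "ereal t * f c + ereal (1 - t) * f b = ereal (t * r + (1-t) * qf bf b)"
          using real fb by simp
        finally have "ereal (qf bf (b + t *\<^sub>R d)) \<le> ereal (t * r + (1-t) * qf bf b)"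
          using bc(2)[of "b + t *\<^sub>R d"] eq by (metis order_trans)
        hence ineq: "qf bf (b + t *\<^sub>R d) \<le> t * r + (1-t) * qf bf b" by simp
        have "bf (b + t *\<^sub>R d) (b + t *\<^sub>R d) = bf b b + 2*t * bf b d + t*t * bf d d"
        proof -
          have "bf (b + t *\<^sub>R d) (b + t *\<^sub>R d) = bf b (b + t *\<^sub>R d) + t * bf d (b + t *\<^sub>R d)"
            using assms(2) by (simp add: bilinear_ladd bilinear_lmul)
          also have "\<dots> = (bf b b + t * bf b d) + t * (bf d b + t * bf d d)"
            using assms(2) by (simp add: bilinear_radd bilinear_rmul)
          finally show ?thesis using assms(3)[of d b] by (simp add: algebra_simps)
        qed
        thus "t * bf b d + t * t * qf bf d \<le> t * (r - qf bf b)"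
          using ineq unfolding qf_def by (simp add: field_simps)
      qed
      moreover have "bf b d = bf b c - bf b b"
        using assms(2) by (simp add: d_def bilinear_rsub)
      ultimately have "bf c b - r \<le> qf bf b" using assms(3)[of c b] unfolding qf_def by simp
      thus ?thesis using real by simp
    qed
  qed
  show ?thesis
    unfolding Pq_def
  proof (intro set_eqI iffI; simp)
    fix b assume "fat bf f b = ereal (qf bf b)"
    thus "f b = ereal (qf bf b)" using bc[of b] by (metis antisym)
  next
    fix b assume "f b = ereal (qf bf b)"
    thus "fat bf f b = ereal (qf bf b)" using key[of b] bc[of b] by (metis antisym)
  qed
qed

end
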